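(* Let $\mu\in\mathcal{RP}_p(\mathbb{C})$ and let $\{\mu^t\}_{0\le t<1}$ be the differentiation flow starting from $\mu$. Then (1) for any $t\in(0,1)$, $0$ is in the support of $\mu^t$; (2) for any $t\in(0,1)$, $\mu^t$ has a density on $\mathbb{C}$; in particular $\mu^t(\{z:|z|=r\})=0$ for every $r>0$.
   Context: $\mathcal{RP}_p(\mathbb{C})$ is the set of rotationally invariant probability measures $\mu$ on $\mathbb{C}$ with $\int_0^1\mu(\mathbb{D}_r)r^{-1}dr<\infty$, where $\mathbb{D}_r=\{|z|<r\}$. The radial CDF of a rotationally invariant probability measure $\nu$ is $\Phi(r)=\nu(\{|z|\le r\})$, and its quantile function is $\Phi^{\langle-1\rangle}(x)=\inf\{r:\Phi(r)\ge x\}$. The differentiation flow starting from $\mu$ (with radial CDF $\Phi_0$) is the family $\{\mu^t\}_{0\le t<1}$ where $\mu^t$ is the rotationally invariant probability measure whose radial CDF $\Phi_t$ has quantile function $\Phi_t^{\langle-1\rangle}(x)=\frac{x(1-t)\Phi_0^{\langle-1\rangle}((1-t)x+t)}{x(1-t)+t}$ for $x\in(0,1)$. *)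

theory Defs
  imports "HOL-Probability.Probability"
begin

definition rot_inv_prob :: "complex measure \<Rightarrow> bool" where
  "rot_inv_prob \<nu> \<longleftrightarrow> prob_space \<nu> \<and> sets \<nu> = sets borel \<and>
     (\<forall>\<theta>::real. distr \<nu> borel (\<lambda>z. cis \<theta> * z) = \<nu>)"

definition RP_p :: "complex measure \<Rightarrow> bool" where
  "RP_p \<mu> \<longleftrightarrow> rot_inv_prob \<mu> \<and>
     (\<integral>\<^sup>+ r \<in> {0<..<1::real}. ennreal (measure \<mu> (ball 0 r) / r) \<partial>lborel) < \<infinity>"

definition radial_cdf :: "complex measure \<Rightarrow> real \<Rightarrow> real" where
  "radial_cdf \<nu> r = measure \<nu> {z. cmod z \<le> r}"

definition quantile :: "(real \<Rightarrow> real) \<Rightarrow> real \<Rightarrow> real" where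
  "quantile F x = Inf {r. F r \<ge> x}"

definition diff_flow_at :: "complex measure \<Rightarrow> real \<Rightarrow> complex measure \<Rightarrow> bool" where
  "diff_flow_at \<mu> t \<nu> \<longleftrightarrow> rot_inv_prob \<nu> \<and>
     (\<forall>x\<in>{0<..<1::real}. quantile (radial_cdf \<nu>) x =
        x * (1 - t) * quantile (radial_cdf \<mu>) ((1 - t) * x + t) / (x * (1 - t) + t))"

definition measure_support :: "complex measure \<Rightarrow> complex set" where
  "measure_support \<nu> = {z. \<forall>e>0. emeasure \<nu> (ball z e) > 0}"

end

theory Submission
  imports Defs
begin

lemma inv_has_integral:
  fixes m e :: real assumes "0 < e" "e \<le> 1/2"
  shows "((\<lambda>r. m / r) has_integral (m * (ln (1/2) - ln e))) {e..1/2}"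
proof -
  have "((\<lambda>r. m / r) has_integral (m * ln (1/2) - m * ln e)) {e..1/2}"
  proof (rule fundamental_theorem_of_calculus[where f = "\<lambda>r. m * ln r"])
    show "e \<le> 1/2" by fact
    fix x assume x: "x \<in> {e..1/2}"
    then have "x > 0" using assms by auto
    then have "((\<lambda>r. m * ln r) has_real_derivative (m / x)) (at x within {e..1/2})"
      by (auto intro!: derivative_eq_intros simp: field_simps)
    then show "((\<lambda>r. m * ln r) has_vector_derivative (m / x)) (at x within {e..1/2})"
      by (simp add: has_real_derivative_iff_has_vector_derivative)
  qed
  then show ?thesis by (simp add: right_diff_distrib)
qed

lemma RP_no_atom:
  assumes "RP_p \<mu>" shows "measure \<mu> {0} = 0"
proof (rule ccontr)
  assume ne: "measure \<mu> {0} \<noteq> 0"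
  define m where "m = measure \<mu> {0}"
  have pr: "prob_space \<mu>" and se: "sets \<mu> = sets borel" using assms by (auto simp: RP_p_def rot_inv_prob_def)
  interpret prob_space \<mu> by fact
  have mpos: "m > 0" using ne by (simp add: m_def zero_less_measure_iff)
  define I where "I = (\<integral>\<^sup>+ r \<in> {0<..<1::real}. ennreal (measure \<mu> (ball 0 r) / r) \<partial>lborel)"
  have "I < \<infinity>" using assms by (simp add: RP_p_def I_def)
  then obtain K where K: "I = ennreal K" "K \<ge> 0" using less_top ennreal_cases by (metis ennreal_less_top infinity_ennreal_def less_irrefl)
  define e where "e = exp (- (K/m) - 1) * (1/2)"
  have e0: "0 < e" and e1: "e \<le> 1/2" unfolding e_def using K mpos by (auto simp: divide_nonneg_pos intro: order_trans[of _ 0])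
  have lne: "ln e = - (K/m) - 1 + ln (1/2)" unfolding e_def by (subst ln_mult) auto
  have "ennreal (m * (ln (1/2) - ln e)) = (\<integral>\<^sup>+ r. ennreal (indicator {e..1/2} r * (m / r)) \<partial>lborel)"
    using nn_integral_has_integral_lebesgue[OF _ inv_has_integral[OF e0 e1, of m]] mpos e0
    by (auto simp: indicator_def)
  also have "\<dots> \<le> I" unfolding I_def
  proof (rule nn_integral_mono)
    fix r :: real
    show "ennreal (indicator {e..1/2} r * (m / r)) \<le> ennreal (measure \<mu> (ball 0 r) / r) * indicator {0<..<1} r"
    proof (cases "r \<in> {e..1/2}")
      case True
      then have r: "0 < r" "r < 1" using e0 by auto
      have "{0} \<subseteq> ball (0::complex) r" using r by auto
      then have "m \<le> measure \<mu> (ball 0 r)" unfolding m_def using se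
        by (intro finite_measure_mono) auto
      then have "m / r \<le> measure \<mu> (ball 0 r) / r" using r by (simp add: divide_right_mono)
      then show ?thesis using True r by (auto simp: indicator_def intro: ennreal_leI)
    next
      case False then show ?thesis by simp
    qed
  qed
  finally have "m * (ln (1/2) - ln e) \<le> K" using K by (metis ennreal_le_iff)
  moreover have "m * (ln (1/2) - ln e) = K + m" using mpos unfolding lne by (simp add: field_simps)
  ultimately show False using mpos by simp
qed

lemma rcdf_facts:
  assumes "prob_space M" "sets M = sets borel"
  shows "real_distribution (distr M borel cmod)"
    and "radial_cdf M = cdf (distr M borel cmod)"
proof -
  interpret prob_space M by fact
  have sp: "space M = UNIV" using assms(2) sets_eq_imp_space_eq by fastforce
  have meas: "cmod \<in> borel_measurable M"
    unfolding measurable_cong_sets[OF assms(2) refl]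
    by (intro borel_measurable_continuous_onI continuous_intros)
  show "real_distribution (distr M borel cmod)" using meas by simp
  show "radial_cdf M = cdf (distr M borel cmod)"
    using meas by (auto simp: fun_eq_iff radial_cdf_def cdf_def measure_distr sp vimage_def)
qed

lemma rcdf_props:
  assumes "prob_space M" "sets M = sets borel"
  shows "mono (radial_cdf M)" "\<And>r. 0 \<le> radial_cdf M r" "\<And>r. radial_cdf M r \<le> 1"
    "\<And>r. r < 0 \<Longrightarrow> radial_cdf M r = 0"
    "(radial_cdf M \<longlongrightarrow> 1) at_top"
    "\<And>a. continuous (at_right a) (radial_cdf M)"
    "radial_cdf M 0 = measure M {0}"
proof -
  interpret real_distribution "distr M borel cmod" using rcdf_facts[OF assms] by simp
  note e = rcdf_facts(2)[OF assms]
  show "mono (radial_cdf M)" unfolding e by (simp add: cdf_nondecreasing monoI)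
  show "\<And>r. 0 \<le> radial_cdf M r" unfolding e by (simp add: cdf_nonneg)
  show "\<And>r. radial_cdf M r \<le> 1" unfolding e by (simp add: cdf_bounded_prob)
  show "\<And>r. r < 0 \<Longrightarrow> radial_cdf M r = 0"
  proof -
    fix r :: real assume "r < 0"
    then have "{z. cmod z \<le> r} = {}" by (auto simp: not_le intro: less_le_trans[OF _ norm_ge_zero])
    then show "radial_cdf M r = 0" by (simp add: radial_cdf_def)
  qed
  show "(radial_cdf M \<longlongrightarrow> 1) at_top" unfolding e by (rule cdf_lim_at_top_prob)
  show "\<And>a. continuous (at_right a) (radial_cdf M)" unfolding e by (rule cdf_is_right_cont)
  have "{z. cmod z \<le> 0} = {0::complex}" by auto
  then show "radial_cdf M 0 = measure M {0}" by (simp add: radial_cdf_def)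
qed

lemma quantile_galois:
  fixes F :: "real \<Rightarrow> real"
  assumes mono: "mono F" and neg: "\<And>r. r < 0 \<Longrightarrow> F r = 0"
    and lim: "(F \<longlongrightarrow> 1) at_top" and rc: "\<And>a. continuous (at_right a) F"
    and x: "0 < x" "x < 1"
  shows "quantile F x \<le> r \<longleftrightarrow> x \<le> F r"
proof -
  let ?S = "{r. F r \<ge> x}"
  have ne: "?S \<noteq> {}"
  proof -
    have "eventually (\<lambda>r. F r > x) at_top" using order_tendstoD(1)[OF lim x(2)] .
    then obtain r where "F r > x" by (meson eventually_happens' trivial_limit_at_top_linorder)
    then show ?thesis by (blast intro: less_imp_le)
  qed
  have bdd: "bdd_below ?S"
  proof
    fix r assume "r \<in> ?S"
    then show "0 \<le> r" using neg x by (metis mem_Collect_eq not_le not_less_iff_gr_or_eq)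
  qed
  have q: "x \<le> F (quantile F x)"
  proof (rule ccontr)
    let ?q = "quantile F x"
    assume "\<not> x \<le> F ?q"
    then have lt: "F ?q < x" by simp
    have "(F \<longlongrightarrow> F ?q) (at_right ?q)" using rc[of ?q] by (simp add: continuous_within)
    from order_tendstoD(2)[OF this lt] obtain b where b: "b > ?q" "\<And>y. ?q < y \<Longrightarrow> y < b \<Longrightarrow> F y < x"
      unfolding eventually_at_right_field by blast
    have "Inf ?S < b" using b(1) by (simp add: quantile_def)
    then obtain s where s: "s \<in> ?S" "s < b" using ne by (meson cInf_lessD)
    have "?q \<le> s" unfolding quantile_def using s(1) bdd by (rule cInf_lower)
    show False
    proof (cases "s = ?q")
      case True then show False using s lt by simp
    next
      case False then show False using b(2)[of s] s \<open>?q \<le> s\<close> by simp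
    qed
  qed
  show ?thesis
  proof
    assume "quantile F x \<le> r"
    then show "x \<le> F r" using q mono by (meson monoD order_trans)
  next
    assume "x \<le> F r"
    then show "quantile F x \<le> r" unfolding quantile_def using bdd by (intro cInf_lower) auto
  qed
qed




lemma Ln_loc_lip:
  assumes "z \<notin> \<real>\<^sub>\<le>\<^sub>0"
  shows "\<exists>d>0. \<forall>y. dist y z < d \<longrightarrow> cmod (Ln y - Ln z) \<le> (cmod (inverse z) + 1) * cmod (y - z)"
proof -
  have "((\<lambda>y. (Ln y - Ln z) / (y - z)) \<longlongrightarrow> inverse z) (at z)"
    using has_field_derivative_Ln[OF assms] by (simp add: has_field_derivative_iff)
  then have "((\<lambda>y. cmod ((Ln y - Ln z) / (y - z))) \<longlongrightarrow> cmod (inverse z)) (at z)"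
    by (rule tendsto_norm)
  from order_tendstoD(2)[OF this, of "cmod (inverse z) + 1"]
  have "eventually (\<lambda>y. cmod ((Ln y - Ln z) / (y - z)) < cmod (inverse z) + 1) (at z)" by simp
  then obtain d where d: "d > 0" "\<And>y. y \<noteq> z \<Longrightarrow> dist y z < d \<Longrightarrow> cmod ((Ln y - Ln z) / (y - z)) < cmod (inverse z) + 1"
    unfolding eventually_at by auto
  show ?thesis
  proof (intro exI conjI allI impI)
    fix y assume y: "dist y z < d"
    show "cmod (Ln y - Ln z) \<le> (cmod (inverse z) + 1) * cmod (y - z)"
    proof (cases "y = z")
      case False
      have "cmod (Ln y - Ln z) = cmod ((Ln y - Ln z) / (y - z)) * cmod (y - z)"
        using False by (simp add: norm_divide)
      also have "\<dots> \<le> (cmod (inverse z) + 1) * cmod (y - z)"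
        using d(2)[OF False y] by (intro mult_right_mono) auto
      finally show ?thesis .
    qed simp
  qed (use d in auto)
qed

lemma Arg_loc_lip:
  assumes "z \<notin> \<real>\<^sub>\<le>\<^sub>0"
  shows "\<exists>d>0. \<forall>y. y \<notin> \<real>\<^sub>\<le>\<^sub>0 \<longrightarrow> dist y z < d \<longrightarrow> \<bar>Arg y - Arg z\<bar> \<le> (cmod (inverse z) + 1) * cmod (y - z)"
proof -
  obtain d where d: "d > 0" "\<And>y. dist y z < d \<Longrightarrow> cmod (Ln y - Ln z) \<le> (cmod (inverse z) + 1) * cmod (y - z)"
    using Ln_loc_lip[OF assms] by blast
  have z0: "z \<noteq> 0" using assms by auto
  show ?thesis
  proof (intro exI conjI allI impI)
    fix y assume y: "y \<notin> \<real>\<^sub>\<le>\<^sub>0" "dist y z < d"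
    then have y0: "y \<noteq> 0" by auto
    have "\<bar>Arg y - Arg z\<bar> = \<bar>Im (Ln y - Ln z)\<bar>" using y0 z0 by (simp add: Arg_eq_Im_Ln)
    also have "\<dots> \<le> cmod (Ln y - Ln z)" by (rule abs_Im_le_cmod)
    also have "\<dots> \<le> (cmod (inverse z) + 1) * cmod (y - z)" using d(2) y(2) by simp
    finally show "\<bar>Arg y - Arg z\<bar> \<le> (cmod (inverse z) + 1) * cmod (y - z)" .
  qed (use d in auto)
qed

lemma dim_ok: "DIM(complex) \<le> DIM(real \<times> real)" by simp


locale flow =
  fixes \<mu> \<nu> :: "complex measure" and t :: real
  assumes RP: "RP_p \<mu>" and t0: "0 < t" and t1: "t < 1" and fl: "diff_flow_at \<mu> t \<nu>"
begin

definition "F0 = radial_cdf \<mu>"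
definition "F = radial_cdf \<nu>"
definition "Q0 = quantile F0"
definition "Q = quantile F"
definition "c = t * (1 - t) * Q0 t"

lemma mu: "prob_space \<mu>" "sets \<mu> = sets borel"
  using RP by (auto simp: RP_p_def rot_inv_prob_def)
lemma nu: "prob_space \<nu>" "sets \<nu> = sets borel"
  using fl by (auto simp: diff_flow_at_def rot_inv_prob_def)

lemmas F0p = rcdf_props[OF mu, folded F0_def]
lemmas Fp = rcdf_props[OF nu, folded F_def]

lemma galois0: "0 < x \<Longrightarrow> x < 1 \<Longrightarrow> Q0 x \<le> r \<longleftrightarrow> x \<le> F0 r"
  unfolding Q0_def by (rule quantile_galois[OF F0p(1,4,5,6)])
lemma galois: "0 < x \<Longrightarrow> x < 1 \<Longrightarrow> Q x \<le> r \<longleftrightarrow> x \<le> F r"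
  unfolding Q_def by (rule quantile_galois[OF Fp(1,4,5,6)])

lemma Q0_mono: assumes "0 < x" "x \<le> y" "y < 1" shows "Q0 x \<le> Q0 y"
proof -
  have "y \<le> F0 (Q0 y)" using galois0[of y "Q0 y"] assms by simp
  then have "x \<le> F0 (Q0 y)" using assms by simp
  then show ?thesis using galois0[of x "Q0 y"] assms by simp
qed

lemma q_pos: "Q0 t > 0"
proof -
  have "F0 0 = 0" using F0p(7) RP_no_atom[OF RP] by simp
  moreover have "(F0 \<longlongrightarrow> F0 0) (at_right 0)" using F0p(6)[of 0] by (simp add: continuous_within)
  ultimately have "eventually (\<lambda>y. F0 y < t) (at_right 0)" using order_tendstoD(2) t0 by fastforce
  then obtain b where b: "b > 0" "\<And>y. 0 < y \<Longrightarrow> y < b \<Longrightarrow> F0 y < t"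
    unfolding eventually_at_right_field by blast
  have "F0 (b/2) < t" using b by simp
  then have "\<not> Q0 t \<le> b/2" using galois0[of t "b/2"] t0 t1 by simp
  then show ?thesis using b by simp
qed

lemma c_pos: "c > 0" unfolding c_def using q_pos t0 t1 by simp

lemma Qform: "0 < x \<Longrightarrow> x < 1 \<Longrightarrow> Q x = x * (1 - t) * Q0 ((1 - t) * x + t) / (x * (1 - t) + t)"
  using fl unfolding diff_flow_at_def Q_def Q0_def F_def F0_def by auto

lemma h_bounds: "0 < x \<Longrightarrow> x < 1 \<Longrightarrow> t \<le> (1 - t) * x + t \<and> (1 - t) * x + t < 1"
proof -
  assume x: "0 < x" "x < 1"
  have "(1 - t) * x < (1 - t)" using mult_strict_left_mono[of x 1 "1-t"] x t1 by simp
  moreover have "0 \<le> (1-t)*x" using x t1 by simp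
  ultimately show ?thesis by linarith
qed

lemma Q_pos: assumes "0 < x" "x < 1" shows "Q x > 0"
proof -
  have "Q0 t \<le> Q0 ((1 - t) * x + t)" using h_bounds[OF assms] t0 by (intro Q0_mono) auto
  then have "Q0 ((1 - t) * x + t) > 0" using q_pos by simp
  moreover have "0 < x*(1-t)+t" using assms t0 t1 by (simp add: add_pos_pos)
  ultimately show ?thesis unfolding Qform[OF assms] using assms t0 t1 by (intro divide_pos_pos mult_pos_pos) auto
qed

lemma Q_incr: assumes "0 < x" "x < y" "y < 1" shows "c * (y - x) \<le> Q y - Q x"
proof -
  define a where "a = x * (1 - t) + t"
  define b where "b = y * (1 - t) + t"
  have hx: "t \<le> (1 - t) * x + t \<and> (1 - t) * x + t < 1" using h_bounds assms by simp
  have hy: "t \<le> (1 - t) * y + t \<and> (1 - t) * y + t < 1" using h_bounds assms by simp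
  have a: "t \<le> a" "a < 1" using hx unfolding a_def by (auto simp: mult.commute)
  have b: "t \<le> b" "b < 1" using hy unfolding b_def by (auto simp: mult.commute)
  define u where "u = Q0 ((1 - t) * x + t)"
  define v where "v = Q0 ((1 - t) * y + t)"
  have qu: "Q0 t \<le> u" unfolding u_def using hx t0 by (intro Q0_mono) auto
  have "0 < (1 - t) * x + t" using assms t0 t1 by (simp add: add_pos_pos)
  then have uv: "u \<le> v" unfolding u_def v_def using hx hy assms t1 by (intro Q0_mono) (auto intro: mult_left_mono)
  have x1: "x < 1" using assms by simp
  have Qx: "Q x = (x * (1 - t) / a) * u" using Qform[of x] x1 assms unfolding u_def a_def by simp
  have y0: "0 < y" using assms by simp
  have Qy: "Q y = (y * (1 - t) / b) * v" using Qform[of y] y0 assms unfolding v_def b_def by simp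
  have gdiff: "y * (1 - t) / b - x * (1 - t) / a = t * (1 - t) * (y - x) / (a * b)"
    using a b t0 unfolding a_def b_def by (simp add: field_simps)
  have ab: "0 < a * b" "a * b \<le> 1" using a b t0 by (auto intro: mult_le_one)
  have g1: "t * (1 - t) * (y - x) \<le> t * (1 - t) * (y - x) / (a * b)"
    using ab assms t0 t1 by (simp add: le_divide_eq)
  have gpos: "0 \<le> y * (1 - t) / b" using assms t1 b t0 by simp
  have "Q y - Q x \<ge> (y * (1 - t) / b) * u - (x * (1 - t) / a) * u"
    unfolding Qx Qy using mult_left_mono[OF uv gpos] by simp
  also have "(y * (1 - t) / b) * u - (x * (1 - t) / a) * u = (t * (1 - t) * (y - x) / (a * b)) * u"
    by (simp add: gdiff[symmetric] left_diff_distrib)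
  finally have 1: "(t * (1 - t) * (y - x) / (a * b)) * u \<le> Q y - Q x" .
  have "c * (y - x) = (t * (1 - t) * (y - x)) * Q0 t" unfolding c_def by simp
  also have "\<dots> \<le> (t * (1 - t) * (y - x) / (a * b)) * u"
    using g1 qu q_pos assms t0 t1 ab by (intro mult_mono) auto
  finally show ?thesis using 1 by simp
qed

lemma F_lip: assumes "r \<le> s" shows "F s - F r \<le> (s - r) / c"
proof (rule ccontr)
  assume neg: "\<not> ?thesis"
  define w where "w = (s - r) / c"
  have d: "F s - F r - w > 0" using neg unfolding w_def by simp
  define d where "d = F s - F r - w"
  define x where "x = F r + d/3"
  define y where "y = F s - d/3"
  have "w \<ge> 0" using assms c_pos unfolding w_def by simp
  then have xy: "0 < x" "x < y" "y < 1" "x > F r" "y \<le> F s"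
    using d Fp(2)[of r] Fp(3)[of s] unfolding x_def y_def d_def by (auto simp: field_simps)
  have "\<not> Q x \<le> r" using galois[of x r] xy by simp
  moreover have "Q y \<le> s" using galois[of y s] xy by simp
  moreover have "c * (y - x) \<le> Q y - Q x" using Q_incr xy by simp
  moreover have "c * (y - x) > s - r"
  proof -
    have "y - x > w" using d unfolding x_def y_def d_def by (simp add: field_simps)
    then have "y - x > (s - r) / c" unfolding w_def .
    then show ?thesis using pos_divide_less_eq[OF c_pos] by (simp add: mult.commute)
  qed
  ultimately show False by simp
qed

lemma F_Q: assumes "0 < x" "x < 1" shows "F (Q x) = x"
proof -
  have ge: "x \<le> F (Q x)" using galois[of x "Q x"] assms by simp
  have "F (Q x) \<le> x + \<delta> / c" if "\<delta> > 0" for \<delta>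
  proof -
    have "\<not> Q x \<le> Q x - \<delta>" using that by simp
    then have "F (Q x - \<delta>) < x" using galois[of x "Q x - \<delta>"] assms by simp
    moreover have "F (Q x) - F (Q x - \<delta>) \<le> \<delta> / c" using F_lip[of "Q x - \<delta>" "Q x"] that by simp
    ultimately show ?thesis by simp
  qed
  then have "F (Q x) \<le> x"
  proof -
    assume h: "\<And>\<delta>. \<delta> > 0 \<Longrightarrow> F (Q x) \<le> x + \<delta> / c"
    show ?thesis
    proof (rule ccontr)
      assume "\<not> F (Q x) \<le> x"
      then have "(F (Q x) - x) * c / 2 > 0" using c_pos by simp
      from h[OF this] show False using c_pos \<open>\<not> F (Q x) \<le> x\<close> by (simp add: field_simps)
    qed
  qed
  with ge show ?thesis by simp
qed


lemma support: "0 \<in> measure_support \<nu>"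
  unfolding measure_support_def
proof (intro CollectI allI impI)
  fix e :: real assume e: "e > 0"
  interpret N: prob_space \<nu> by (rule nu(1))
  define M where "M = Q0 ((1 + t) / 2)"
  have M: "Q0 t \<le> M" unfolding M_def using t0 t1 by (intro Q0_mono) auto
  then have Mpos: "M > 0" using q_pos by simp
  define x where "x = min (1/2) (e * t / (2 * (M + 1)))"
  have "e * t / (2 * (M + 1)) > 0" using e t0 Mpos by simp
  moreover have "x \<le> 1/2" unfolding x_def by (rule min.cobounded1)
  moreover have "x \<le> e * t / (2 * (M + 1))" unfolding x_def by (rule min.cobounded2)
  ultimately have x: "0 < x" "x \<le> 1/2" "x \<le> e * t / (2 * (M + 1))" unfolding x_def by auto
  have x1: "x < 1" using x by simp
  have hx: "t \<le> (1 - t) * x + t \<and> (1 - t) * x + t < 1" using h_bounds x x1 by simp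
  have "(1 - t) * x \<le> (1 - t) * (1/2)" using x t1 by (intro mult_left_mono) auto
  then have hle: "(1 - t) * x + t \<le> (1 + t) / 2" by simp
  have "Q0 ((1 - t) * x + t) \<le> M" unfolding M_def using hx hle t0 t1 by (intro Q0_mono) auto
  moreover have "Q0 ((1 - t) * x + t) \<ge> 0" using Q0_mono[of t "(1 - t) * x + t"] hx q_pos t0 by simp
  ultimately have "x * (1 - t) * Q0 ((1 - t) * x + t) \<le> x * 1 * M"
    using x t0 t1 by (intro mult_mono) auto
  moreover have "x * (1 - t) + t \<ge> t" using x t1 by simp
  ultimately have "Q x \<le> x * M / t"
    unfolding Qform[OF x(1) x1] using x t0 t1 Mpos
    by (smt (verit, best) frac_le mult_nonneg_nonneg mult_cancel_left2)
  also have "\<dots> \<le> (e * t / (2 * (M + 1))) * M / t" using x Mpos t0 by (intro divide_right_mono mult_right_mono) auto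
  also have "\<dots> = (e / 2) * (M / (M + 1))" using t0 Mpos by (simp add: divide_simps)
  also have "\<dots> \<le> e / 2" using e Mpos by (intro mult_left_le) auto
  finally have "Q x \<le> e/2" .
  then have "x \<le> F (e/2)" using galois[OF x(1) x1, of "e/2"] by blast
  then have Fpos: "F (e/2) > 0" using x by simp
  have "{z. cmod z \<le> e/2} \<subseteq> ball (0::complex) e" using e by auto
  then have "emeasure \<nu> {z. cmod z \<le> e/2} \<le> emeasure \<nu> (ball 0 e)"
    using nu(2) by (intro emeasure_mono) auto
  moreover have "emeasure \<nu> {z. cmod z \<le> e/2} = ennreal (F (e/2))"
    unfolding F_def radial_cdf_def by (rule N.emeasure_eq_measure)
  ultimately show "emeasure \<nu> (ball 0 e) > 0" using Fpos by (metis ennreal_less_zero_iff order_less_le_trans)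
qed

lemma sphere0: assumes "r > 0" shows "measure \<nu> (sphere 0 r) = 0"
proof -
  interpret N: prob_space \<nu> by (rule nu(1))
  have le: "measure \<nu> (sphere 0 r) \<le> \<delta> / c" if d: "\<delta> > 0" for \<delta>
  proof -
    have sub: "sphere (0::complex) r \<subseteq> {z. cmod z \<le> r} - {z. cmod z \<le> r - \<delta>}" using d by auto
    have meas: "{z. cmod z \<le> r} \<in> sets \<nu>" "{z::complex. cmod z \<le> r - \<delta>} \<in> sets \<nu>"
      using nu(2) by auto
    have "measure \<nu> (sphere 0 r) \<le> measure \<nu> ({z. cmod z \<le> r} - {z. cmod z \<le> r - \<delta>})"
      using sub meas nu(2) by (intro N.finite_measure_mono) auto
    also have "\<dots> = F r - F (r - \<delta>)"
      unfolding F_def radial_cdf_def using meas d by (subst N.finite_measure_Diff) auto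
    also have "\<dots> \<le> \<delta> / c" using F_lip[of "r - \<delta>" r] d by simp
    finally show ?thesis .
  qed
  show ?thesis
  proof (rule ccontr)
    assume "measure \<nu> (sphere 0 r) \<noteq> 0"
    then have p: "measure \<nu> (sphere 0 r) > 0" by (simp add: zero_less_measure_iff)
    have "measure \<nu> (sphere 0 r) \<le> (c * measure \<nu> (sphere 0 r) / 2) / c"
      using p c_pos by (intro le) auto
    then show False using p c_pos by simp
  qed
qed


definition "Qe x = (if 0 < x \<and> x < 1 then Q x else 0)"
definition "U = uniform_measure lborel {0<..<1::real}"

lemma Qe_meas[measurable]: "Qe \<in> borel_measurable borel"
  unfolding borel_measurable_iff_le
proof
  fix a :: real
  have "{w \<in> space borel. Qe w \<le> a} = {w \<in> space borel. (0<w \<and> w<1 \<and> w \<le> F a) \<or> (\<not>(0<w \<and> w<1) \<and> 0 \<le> a)}"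
    using galois by (auto simp: Qe_def)
  also have "\<dots> \<in> sets borel" by measurable
  finally show "{w \<in> space borel. Qe w \<le> a} \<in> sets borel" .
qed

lemma U_lborel: "emeasure lborel {0<..<1::real} = 1" by simp

lemma U_prob: "prob_space U"
  unfolding U_def by (rule prob_space_uniform_measure) auto

lemma sets_U: "sets U = sets borel" unfolding U_def by simp

lemma Qe_meas_U: "Qe \<in> borel_measurable U"
  unfolding measurable_cong_sets[OF sets_U refl] by (rule Qe_meas)

lemma cdf_U: "cdf (distr U borel Qe) r = F r"
proof -
  have "cdf (distr U borel Qe) r = measure U (Qe -` {..r} \<inter> space U)"
    unfolding cdf_def using Qe_meas_U by (simp add: measure_distr)
  also have "Qe -` {..r} \<inter> space U = Qe -` {..r}" using sets_eq_imp_space_eq[OF sets_U] by simp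
  also have "measure U (Qe -` {..r}) = measure lborel ({0<..<1} \<inter> Qe -` {..r}) / measure lborel {0<..<1::real}"
    unfolding U_def by (rule measure_uniform_measure) (auto intro: measurable_sets[OF Qe_meas, simplified])
  also have "{0<..<1} \<inter> Qe -` {..r} = {w. 0 < w \<and> w < 1 \<and> w \<le> F r}"
    using galois by (auto simp: Qe_def)
  also have "measure lborel {w. 0 < w \<and> w < 1 \<and> w \<le> F r} = F r"
  proof (cases "F r < 1")
    case True
    then have "{w. 0 < w \<and> w < 1 \<and> w \<le> F r} = {0<..F r}" by auto
    then show ?thesis using Fp(2)[of r] by simp
  next
    case False
    then have "F r = 1" using Fp(3)[of r] by simp
    then have "{w. 0 < w \<and> w < 1 \<and> w \<le> F r} = {0<..<1}" by auto
    then show ?thesis using \<open>F r = 1\<close> by simp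
  qed
  finally show ?thesis by simp
qed

lemma radial_distr: "distr \<nu> borel cmod = distr U borel Qe"
proof (rule cdf_unique)
  show "real_distribution (distr \<nu> borel cmod)" by (rule rcdf_facts(1)[OF nu])
  show "real_distribution (distr U borel Qe)"
    using prob_space.real_distribution_distr[OF U_prob Qe_meas_U] .
  show "cdf (distr \<nu> borel cmod) = cdf (distr U borel Qe)"
    using rcdf_facts(2)[OF nu] cdf_U by (simp add: fun_eq_iff F_def)
qed


lemma F_abs: "\<bar>F a - F b\<bar> \<le> \<bar>a - b\<bar> / c"
proof (cases "a \<le> b")
  case True
  then have "F b - F a \<le> (b - a) / c" by (rule F_lip)
  moreover have "F a \<le> F b" using Fp(1) True by (simp add: monoD)
  ultimately show ?thesis using True by (simp add: abs_if)
next
  case False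
  then have "F a - F b \<le> (a - b) / c" by (intro F_lip) simp
  moreover have "F b \<le> F a" using Fp(1) False by (simp add: monoD)
  ultimately show ?thesis using False by (simp add: abs_if)
qed

definition "G k z = (F (cmod z), Arg z + 2 * pi * real_of_int k)"

lemma G_negl: assumes "negligible A" shows "negligible (G k ` (A - \<real>\<^sub>\<le>\<^sub>0))"
proof (rule negligible_locally_Lipschitz_image[OF dim_ok])
  show "negligible (A - \<real>\<^sub>\<le>\<^sub>0)" using assms by (rule negligible_subset) auto
  fix x assume x: "x \<in> A - \<real>\<^sub>\<le>\<^sub>0"
  then obtain d where d: "d > 0" "\<And>y. y \<notin> \<real>\<^sub>\<le>\<^sub>0 \<Longrightarrow> dist y x < d \<Longrightarrow> \<bar>Arg y - Arg x\<bar> \<le> (cmod (inverse x) + 1) * cmod (y - x)"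
    using Arg_loc_lip[of x] by blast
  show "\<exists>T B. open T \<and> x \<in> T \<and> (\<forall>y\<in>(A - \<real>\<^sub>\<le>\<^sub>0) \<inter> T. norm (G k y - G k x) \<le> B * norm (y - x))"
  proof (intro exI conjI ballI)
    show "open (ball x d)" by simp
    show "x \<in> ball x d" using d by simp
    fix y assume y: "y \<in> (A - \<real>\<^sub>\<le>\<^sub>0) \<inter> ball x d"
    have "norm (G k y - G k x) = norm (F (cmod y) - F (cmod x), Arg y - Arg x)"
      unfolding G_def by simp
    also have "\<dots> \<le> norm (F (cmod y) - F (cmod x)) + norm (Arg y - Arg x)" by (rule norm_Pair_le)
    also have "norm (F (cmod y) - F (cmod x)) \<le> \<bar>cmod y - cmod x\<bar> / c" using F_abs by simp
    also have "\<dots> \<le> cmod (y - x) / c" using c_pos norm_triangle_ineq3 by (intro divide_right_mono) auto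
    also have "norm (Arg y - Arg x) \<le> (cmod (inverse x) + 1) * cmod (y - x)"
      using d(2)[of y] y by (simp add: dist_commute)
    finally show "norm (G k y - G k x) \<le> (1 / c + (cmod (inverse x) + 1)) * norm (y - x)"
      by (simp add: algebra_simps)
  qed
qed

lemma lines_negl: "negligible {p :: real \<times> real. snd p = v}"
proof -
  have "{p :: real \<times> real. snd p = v} = {p. (0::real, 1::real) \<bullet> p = v}" by auto
  then show ?thesis by (metis negligible_hyperplane[of "(0::real, 1::real)" v] prod.inject zero_prod_def zero_neq_one)
qed

lemma cover:
  assumes x: "0 < x" "x < 1" and z: "complex_of_real (Q x) * cis \<theta> \<in> A"
  shows "(x, \<theta>) \<in> (\<Union>k. G k ` (A - \<real>\<^sub>\<le>\<^sub>0)) \<union> (\<Union>k::int. {p. snd p = (2 * real_of_int k + 1) * pi})"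
proof -
  define k where "k = \<lfloor>(\<theta> + pi) / (2 * pi)\<rfloor>"
  have k1: "real_of_int k \<le> (\<theta> + pi) / (2 * pi)" unfolding k_def by (rule of_int_floor_le)
  have k2: "(\<theta> + pi) / (2 * pi) < real_of_int k + 1" unfolding k_def by (rule real_of_int_floor_add_one_gt)
  have a1: "2 * pi * real_of_int k \<le> \<theta> + pi" using k1 pi_gt_zero by (simp add: le_divide_eq mult.commute)
  have a2: "\<theta> + pi < 2 * pi * (real_of_int k + 1)" using k2 pi_gt_zero by (simp add: divide_less_eq mult.commute)
  define \<phi> where "\<phi> = \<theta> - 2 * pi * real_of_int k"
  have ph: "- pi \<le> \<phi>" "\<phi> < pi" using a1 a2 unfolding \<phi>_def by (auto simp: algebra_simps)
  show ?thesis
  proof (cases "\<phi> = - pi")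
    case True
    then have "\<theta> = (2 * real_of_int (k - 1) + 1) * pi" unfolding \<phi>_def by (simp add: algebra_simps)
    then have "(x, \<theta>) \<in> {p. snd p = (2 * real_of_int (k - 1) + 1) * pi}" by simp
    then show ?thesis by (rule UnI2[OF UN_I[OF UNIV_I]])
  next
    case False
    then have ph1: "- pi < \<phi>" using ph by simp
    have "cis \<theta> = cis (\<phi> + 2 * pi * real_of_int k)" unfolding \<phi>_def by simp
    also have "\<dots> = cis \<phi> * cis (2 * pi * real_of_int k)" by (rule cis_mult[symmetric])
    also have "cis (2 * pi * real_of_int k) = 1" by (rule cis_multiple_2pi) simp
    finally have ct: "cis \<theta> = cis \<phi>" by simp
    define z where "z = rcis (Q x) \<phi>"
    have zA: "z \<in> A" using z ct unfolding z_def rcis_def by simp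
    have Qp: "Q x > 0" using Q_pos x by simp
    have Az: "Arg z = \<phi>" using Qp ph1 ph(2) unfolding z_def by (intro Arg_unique') auto
    have cz: "cmod z = Q x" using Qp unfolding z_def by simp
    have z0: "z \<noteq> 0" using cz Qp by auto
    have "z \<notin> \<real>\<^sub>\<le>\<^sub>0"
    proof
      assume "z \<in> \<real>\<^sub>\<le>\<^sub>0"
      then have "Re z \<le> 0" "Im z = 0" by (auto simp: complex_nonpos_Reals_iff)
      moreover have "Re z \<noteq> 0 \<or> Im z \<noteq> 0" using z0 complex_eq_iff by auto
      ultimately have "Arg z = pi" by (simp add: Arg_eq_pi)
      then show False using Az ph(2) by simp
    qed
    moreover have "G k z = (x, \<theta>)" unfolding G_def Az cz F_Q[OF x] \<phi>_def by simp
    ultimately have "(x, \<theta>) \<in> G k ` (A - \<real>\<^sub>\<le>\<^sub>0)" using zA by (metis DiffI imageI)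
    then show ?thesis by (rule UnI1[OF UN_I[OF UNIV_I]])
  qed
qed

lemma P_negl:
  assumes "negligible A"
  shows "negligible {p. 0 < fst p \<and> fst p < 1 \<and> complex_of_real (Qe (fst p)) * cis (snd p) \<in> A}"
proof (rule negligible_subset)
  show "negligible ((\<Union>k. G k ` (A - \<real>\<^sub>\<le>\<^sub>0)) \<union> (\<Union>k::int. {p :: real \<times> real. snd p = (2 * real_of_int k + 1) * pi}))"
  proof (rule negligible_Un)
    show "negligible (\<Union>k. G k ` (A - \<real>\<^sub>\<le>\<^sub>0))"
    proof (rule negligible_countable_Union)
      fix S assume "S \<in> range (\<lambda>k. G k ` (A - \<real>\<^sub>\<le>\<^sub>0))"
      then obtain k where "S = G k ` (A - \<real>\<^sub>\<le>\<^sub>0)" by blast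
      then show "negligible S" using G_negl[OF assms] by simp
    qed simp
    show "negligible (\<Union>k::int. {p :: real \<times> real. snd p = (2 * real_of_int k + 1) * pi})"
    proof (rule negligible_countable_Union)
      fix S assume "S \<in> range (\<lambda>k::int. {p :: real \<times> real. snd p = (2 * real_of_int k + 1) * pi})"
      then obtain k where "S = {p :: real \<times> real. snd p = (2 * real_of_int k + 1) * pi}" by blast
      then show "negligible S" using lines_negl by simp
    qed simp
  qed
  show "{p. 0 < fst p \<and> fst p < 1 \<and> complex_of_real (Qe (fst p)) * cis (snd p) \<in> A} \<subseteq> (\<Union>k. G k ` (A - \<real>\<^sub>\<le>\<^sub>0)) \<union> (\<Union>k::int. {p. snd p = (2 * real_of_int k + 1) * pi})"
  proof
    fix p :: "real \<times> real" assume "p \<in> {p. 0 < fst p \<and> fst p < 1 \<and> complex_of_real (Qe (fst p)) * cis (snd p) \<in> A}"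
    then have "0 < fst p" "fst p < 1" "complex_of_real (Q (fst p)) * cis (snd p) \<in> A" by (auto simp: Qe_def)
    from cover[OF this] show "p \<in> (\<Union>k. G k ` (A - \<real>\<^sub>\<le>\<^sub>0)) \<union> (\<Union>k::int. {p. snd p = (2 * real_of_int k + 1) * pi})" by simp
  qed
qed


lemma cis_meas[measurable]: "cis \<in> borel_measurable borel"
  by (intro borel_measurable_continuous_onI continuous_intros)

lemma nullA: fixes A :: "complex set" assumes A: "A \<in> null_sets lborel" shows "emeasure \<nu> A = 0"
proof -
  interpret N: prob_space \<nu> by (rule nu(1))
  interpret PS: pair_sigma_finite lborel \<nu>
    by (rule pair_sigma_finite.intro[OF sigma_finite_lborel N.sigma_finite_measure_axioms])
  have Ab[measurable]: "A \<in> sets borel" using null_setsD2[OF A] by simp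
  have negA: "negligible A"
    using A null_sets_completion_iff[of A lborel] Ab by (simp add: negligible_iff_null_sets)
  have spn: "space \<nu> = UNIV" using sets_eq_imp_space_eq[OF nu(2)] by simp
  have rot: "distr \<nu> borel (\<lambda>z. cis \<theta> * z) = \<nu>" for \<theta>
    using fl by (simp add: diff_flow_at_def rot_inv_prob_def)
  define g where "g = (\<lambda>\<theta> z. indicator A (cis \<theta> * z) :: ennreal)"
  have sp: "sets (lborel \<Otimes>\<^sub>M \<nu>) = sets (borel :: (real \<times> complex) measure)"
  proof -
    have "sets (lborel \<Otimes>\<^sub>M \<nu>) = sets ((borel :: real measure) \<Otimes>\<^sub>M (borel :: complex measure))"
      by (rule sets_pair_measure_cong) (simp_all add: nu(2))
    also have "((borel :: real measure) \<Otimes>\<^sub>M (borel :: complex measure)) = (borel :: (real \<times> complex) measure)"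
      by (rule borel_prod)
    finally show ?thesis .
  qed
  have cm: "(\<lambda>p::real \<times> complex. cis (fst p) * snd p) \<in> borel_measurable borel"
    by (intro borel_measurable_continuous_onI continuous_intros)
  have gm: "case_prod g \<in> borel_measurable (lborel \<Otimes>\<^sub>M \<nu>)"
    unfolding measurable_cong_sets[OF sp refl] g_def case_prod_beta
    by (rule measurable_compose[OF cm borel_measurable_indicator[OF Ab]])
  have rm: "(\<lambda>z. cis \<theta> * z) \<in> measurable \<nu> borel" for \<theta>
    unfolding measurable_cong_sets[OF nu(2) refl]
    by (intro borel_measurable_continuous_onI continuous_intros)
  have step1: "emeasure \<nu> A = (\<integral>\<^sup>+z. g \<theta> z \<partial>\<nu>)" for \<theta>
  proof -
    have "emeasure \<nu> A = emeasure (distr \<nu> borel (\<lambda>z. cis \<theta> * z)) A" using rot by simp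
    also have "\<dots> = emeasure \<nu> ((\<lambda>z. cis \<theta> * z) -` A \<inter> space \<nu>)"
      by (rule emeasure_distr[OF rm Ab])
    also have "\<dots> = (\<integral>\<^sup>+z. indicator ((\<lambda>z. cis \<theta> * z) -` A \<inter> space \<nu>) z \<partial>\<nu>)"
      by (rule nn_integral_indicator[symmetric]) (rule measurable_sets[OF rm Ab])
    also have "\<dots> = (\<integral>\<^sup>+z. g \<theta> z \<partial>\<nu>)"
      by (rule nn_integral_cong) (simp add: g_def spn indicator_def)
    finally show ?thesis .
  qed
  define h where "h = (\<lambda>r::real. \<integral>\<^sup>+\<theta>. indicator A (complex_of_real r * cis \<theta>) \<partial>lborel :: ennreal)"
  have hm: "h \<in> borel_measurable borel"
  proof -
    have "(\<lambda>p::real \<times> real. complex_of_real (fst p) * cis (snd p)) \<in> borel_measurable borel"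
      by (intro borel_measurable_continuous_onI continuous_intros)
    then have "(\<lambda>p::real \<times> real. indicator A (complex_of_real (fst p) * cis (snd p)) :: ennreal) \<in> borel_measurable borel"
      by (rule measurable_compose[OF _ borel_measurable_indicator[OF Ab]])
    moreover have sp2: "sets ((borel :: real measure) \<Otimes>\<^sub>M (lborel :: real measure)) = sets (borel :: (real \<times> real) measure)"
    proof -
      have "sets ((borel :: real measure) \<Otimes>\<^sub>M (lborel :: real measure)) = sets ((borel :: real measure) \<Otimes>\<^sub>M (borel :: real measure))"
        by (rule sets_pair_measure_cong) simp_all
      also have "((borel :: real measure) \<Otimes>\<^sub>M (borel :: real measure)) = (borel :: (real \<times> real) measure)"
        by (rule borel_prod)
      finally show ?thesis .
    qed
    ultimately have "case_prod (\<lambda>r \<theta>. indicator A (complex_of_real r * cis \<theta>) :: ennreal) \<in> borel_measurable (borel \<Otimes>\<^sub>M lborel)"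
      unfolding measurable_cong_sets[OF sp2 refl] case_prod_beta by simp
    then show ?thesis unfolding h_def by (rule lborel.borel_measurable_nn_integral)
  qed
  have step3: "(\<integral>\<^sup>+\<theta>. g \<theta> z \<partial>lborel) = h (cmod z)" for z
  proof -
    define k where "k = (\<lambda>\<phi>. indicator A (complex_of_real (cmod z) * cis \<phi>) :: ennreal)"
    have km: "k \<in> borel_measurable borel"
      unfolding k_def by (rule measurable_compose[OF _ borel_measurable_indicator[OF Ab]])
        (intro borel_measurable_continuous_onI continuous_intros)
    have "g \<theta> z = k (Arg z + \<theta>)" for \<theta>
    proof -
      have "cis \<theta> * z = cis \<theta> * (complex_of_real (cmod z) * cis (Arg z))"
        by (metis rcis_cmod_Arg rcis_def)
      also have "\<dots> = complex_of_real (cmod z) * cis (Arg z + \<theta>)" by (simp add: cis_mult[symmetric] ac_simps)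
      finally show ?thesis unfolding g_def k_def by simp
    qed
    then have "(\<integral>\<^sup>+\<theta>. g \<theta> z \<partial>lborel) = (\<integral>\<^sup>+\<theta>. k (Arg z + \<theta>) \<partial>lborel)" by simp
    also have "\<dots> = (\<integral>\<^sup>+\<theta>. k \<theta> \<partial>(distr lborel borel ((+) (Arg z))))"
      using km by (subst nn_integral_distr) auto
    also have "\<dots> = (\<integral>\<^sup>+\<theta>. k \<theta> \<partial>lborel)" by (simp add: lborel_distr_plus)
    finally show ?thesis unfolding h_def k_def .
  qed
  define P where "P = {p :: real \<times> real. 0 < fst p \<and> fst p < 1 \<and> complex_of_real (Qe (fst p)) * cis (snd p) \<in> A}"
  have Pb: "P \<in> sets borel"
  proof -
    have mf[measurable]: "fst \<in> borel_measurable (borel :: (real \<times> real) measure)"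
      by (intro borel_measurable_continuous_onI continuous_intros)
    from measurable_compose[OF mf Qe_meas]
    have m1[measurable]: "(\<lambda>p::real \<times> real. Qe (fst p)) \<in> borel_measurable borel" .
    have m2[measurable]: "(\<lambda>p::real \<times> real. cis (snd p)) \<in> borel_measurable borel"
      by (intro borel_measurable_continuous_onI continuous_intros)
    have "(\<lambda>p::real \<times> real. complex_of_real (Qe (fst p)) * cis (snd p)) \<in> borel_measurable borel" by measurable
    then have "(\<lambda>p::real \<times> real. complex_of_real (Qe (fst p)) * cis (snd p)) -` A \<inter> space borel \<in> sets borel"
      using Ab by (rule measurable_sets)
    moreover have "{p :: real \<times> real. 0 < fst p \<and> fst p < 1} \<in> sets borel" by measurable
    ultimately have "((\<lambda>p::real \<times> real. complex_of_real (Qe (fst p)) * cis (snd p)) -` A \<inter> space borel) \<inter> {p :: real \<times> real. 0 < fst p \<and> fst p < 1} \<in> sets borel"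
      by (rule sets.Int)
    also have "((\<lambda>p::real \<times> real. complex_of_real (Qe (fst p)) * cis (snd p)) -` A \<inter> space borel) \<inter> {p :: real \<times> real. 0 < fst p \<and> fst p < 1} = P"
      unfolding P_def by auto
    finally show ?thesis .
  qed
  have Pb2: "P \<in> sets (lborel \<Otimes>\<^sub>M lborel)" unfolding lborel_prod using Pb by simp
  have P0: "emeasure lborel P = 0"
  proof -
    have "negligible P" unfolding P_def by (rule P_negl[OF negA])
    then have "P \<in> null_sets lebesgue" by (simp add: negligible_iff_null_sets)
    then have "P \<in> null_sets lborel" using null_sets_completion_iff[of P lborel] Pb by simp
    then show ?thesis by auto
  qed
  have hQm: "(\<lambda>x. h (Qe x)) \<in> borel_measurable lborel"
    using measurable_compose[OF Qe_meas hm] by simp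
  have "(\<integral>\<^sup>+\<theta>. emeasure \<nu> A \<partial>lborel) = (\<integral>\<^sup>+\<theta>. \<integral>\<^sup>+z. g \<theta> z \<partial>\<nu> \<partial>lborel)"
    using step1 by simp
  also have "\<dots> = (\<integral>\<^sup>+z. \<integral>\<^sup>+\<theta>. g \<theta> z \<partial>lborel \<partial>\<nu>)"
    by (rule PS.Fubini'[OF gm, symmetric])
  also have "\<dots> = (\<integral>\<^sup>+z. h (cmod z) \<partial>\<nu>)" using step3 by simp
  also have "\<dots> = (\<integral>\<^sup>+r. h r \<partial>(distr \<nu> borel cmod))"
  proof -
    have "cmod \<in> measurable \<nu> borel"
      unfolding measurable_cong_sets[OF nu(2) refl]
      by (intro borel_measurable_continuous_onI continuous_intros)
    then show ?thesis using hm by (subst nn_integral_distr) auto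
  qed
  also have "\<dots> = (\<integral>\<^sup>+r. h r \<partial>(distr U borel Qe))" by (simp add: radial_distr)
  also have "\<dots> = (\<integral>\<^sup>+x. h (Qe x) \<partial>U)"
    using Qe_meas_U hm by (subst nn_integral_distr) auto
  also have "\<dots> = (\<integral>\<^sup>+x. h (Qe x) * indicator {0<..<1} x \<partial>lborel)"
    unfolding U_def using hQm by (subst nn_integral_uniform_measure) (auto simp: divide_ennreal_def)
  also have "\<dots> = (\<integral>\<^sup>+x. \<integral>\<^sup>+\<theta>. indicator P (x, \<theta>) \<partial>lborel \<partial>lborel)"
  proof (rule nn_integral_cong)
    fix x :: real
    show "h (Qe x) * indicator {0<..<1} x = (\<integral>\<^sup>+\<theta>. indicator P (x, \<theta>) \<partial>lborel)"
    proof (cases "0 < x \<and> x < 1")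
      case True
      then show ?thesis unfolding h_def P_def
        by (auto intro!: nn_integral_cong simp: indicator_def)
    next
      case False
      then have "\<And>\<theta>. indicator P (x, \<theta>) = (0::ennreal)" unfolding P_def by (auto simp: indicator_def)
      then show ?thesis using False by (simp add: indicator_def)
    qed
  qed
  also have "\<dots> = emeasure (lborel \<Otimes>\<^sub>M lborel) P"
    using lborel.emeasure_pair_measure[OF Pb2] by simp
  also have "\<dots> = 0" using P0 by (simp add: lborel_prod)
  finally have "emeasure \<nu> A * \<infinity> = 0" by simp
  then show ?thesis by (simp add: mult_eq_0_iff)
qed

lemma abs_cont: "absolutely_continuous lborel \<nu>"
  unfolding absolutely_continuous_def
proof
  fix A :: "complex set" assume A: "A \<in> null_sets lborel"
  then have "A \<in> sets \<nu>" using nu(2) null_setsD2[OF A] by simp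
  then show "A \<in> null_sets \<nu>" using nullA[OF A] by auto
qed

end


theorem proposition4p9:
  fixes \<mu> \<nu> :: "complex measure" and t :: real
  assumes "RP_p \<mu>"
    and "0 < t" and "t < 1"
    and "diff_flow_at \<mu> t \<nu>"
  shows "0 \<in> measure_support \<nu> \<and>
         (\<exists>f \<in> borel_measurable borel. \<nu> = density lborel f) \<and>
         (\<forall>r>0. measure \<nu> (sphere 0 r) = 0)"
proof -
  interpret flow \<mu> \<nu> t using assms by (simp add: flow_def)
  have "sets \<nu> = sets lborel" using nu(2) by simp
  then obtain f where f: "f \<in> borel_measurable lborel" "density lborel f = \<nu>"
    using sigma_finite_measure.Radon_Nikodym[OF sigma_finite_lborel abs_cont] by blast
  then have "\<exists>f \<in> borel_measurable borel. \<nu> = density lborel f" by auto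
  then show ?thesis using support sphere0 by auto
qed

end
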